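(* Let $S_0,S_1,S_2\subseteq\{0,1,2\}^m$ be a meta-extendable collection of admissible sets, and let $T\subseteq\{0,1,2\}^r$ be admissible. Then \[T(S_0,S_1,S_2)=\bigcup_{t\in T} S_{t_1}\times\cdots\times S_{t_r}\subseteq\{0,1,2\}^{mr}\] is an admissible set.
   Context: A set $S\subseteq\{0,1,2\}^m$ is admissible if (1) for all distinct $s,s'\in S$ there are coordinates $i,j$ with $s_i=0\neq s'_i$ and $s_j\neq 0=s'_j$; and (2) for all distinct $s,s',s''\in S$ there is a coordinate $k$ such that the multiset $\{s_k,s'_k,s''_k\}$ equals $\{0,1,2\}$, $\{0,0,1\}$ or $\{0,0,2\}$. The weight of a vector is its number of nonzero coordinates. A collection $S_0,S_1,S_2\subseteq\{0,1,2\}^m$ of admissible sets is meta-extendable if: (1) for any $s\in S_0$ and $s'\in S_1\cup S_2$, the weight of $s$ is less than the weight of $s'$; (2) whenever $x,y\in S_0$ (not necessarily distinct) and $z\in S_1\cup S_2$, there is a coordinate $k$ with the multiset $\{x_k,y_k,z_k\}$ equal to $\{0,1,2\}$, $\{0,0,1\}$ or $\{0,0,2\}$; (3) whenever $x\in S_0$, $y\in S_1$, $z\in S_2$, there is a coordinate $k$ with the multiset $\{x_k,y_k,z_k\}$ equal to $\{0,1,2\}$, $\{0,0,1\}$ or $\{0,0,2\}$. Products $S_{t_1}\times\cdots\times S_{t_r}$ consist of concatenations of vectors. *)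

theory Defs
  imports Main "HOL-Library.Multiset"
begin

definition ternary_vecs :: "nat \<Rightarrow> nat list set" where
  "ternary_vecs m = {s. length s = m \<and> set s \<subseteq> {0,1,2}}"

definition good3 :: "nat \<Rightarrow> nat \<Rightarrow> nat \<Rightarrow> bool" where
  "good3 a b c \<longleftrightarrow> {#a, b, c#} \<in> {{#0,1,2#}, {#0,0,1#}, {#0,0,2#}}"

definition weight :: "nat list \<Rightarrow> nat" where
  "weight s = length (filter (\<lambda>x. x \<noteq> 0) s)"

definition admissible :: "nat \<Rightarrow> nat list set \<Rightarrow> bool" where
  "admissible m S \<longleftrightarrow>
     S \<subseteq> ternary_vecs m \<and>
     (\<forall>s\<in>S. \<forall>s'\<in>S. s \<noteq> s' \<longrightarrow>
        (\<exists>i<m. s ! i = 0 \<and> s' ! i \<noteq> 0) \<and> (\<exists>j<m. s ! j \<noteq> 0 \<and> s' ! j = 0)) \<and>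
     (\<forall>s\<in>S. \<forall>s'\<in>S. \<forall>s''\<in>S. s \<noteq> s' \<and> s \<noteq> s'' \<and> s' \<noteq> s'' \<longrightarrow>
        (\<exists>k<m. good3 (s ! k) (s' ! k) (s'' ! k)))"

definition meta_extendable :: "nat \<Rightarrow> (nat \<Rightarrow> nat list set) \<Rightarrow> bool" where
  "meta_extendable m S \<longleftrightarrow>
     admissible m (S 0) \<and> admissible m (S 1) \<and> admissible m (S 2) \<and>
     (\<forall>s\<in>S 0. \<forall>s'\<in>S 1 \<union> S 2. weight s < weight s') \<and>
     (\<forall>x\<in>S 0. \<forall>y\<in>S 0. \<forall>z\<in>S 1 \<union> S 2. \<exists>k<m. good3 (x ! k) (y ! k) (z ! k)) \<and>
     (\<forall>x\<in>S 0. \<forall>y\<in>S 1. \<forall>z\<in>S 2. \<exists>k<m. good3 (x ! k) (y ! k) (z ! k))"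

definition compose :: "nat list set \<Rightarrow> (nat \<Rightarrow> nat list set) \<Rightarrow> nat list set" where
  "compose T S = (\<Union>t\<in>T. {concat xs | xs. length xs = length t \<and>
                                         (\<forall>i<length t. xs ! i \<in> S (t ! i))})"

end

theory Submission
  imports Defs
begin

lemma good3_iff: "good3 a b c \<longleftrightarrow> (a,b,c) \<in> {(0,1,2),(0,2,1),(1,0,2),(1,2,0),(2,0,1),(2,1,0),
   (0,0,1),(0,1,0),(1,0,0),(0,0,2),(0,2,0),(2,0,0)}" (is "_ \<longleftrightarrow> ?R")
proof
  assume g: "good3 a b c"
  then obtain M where M: "M \<in> {{#0,1,2#}, {#0,0,1#}, {#0,0,2#}}" "{#a,b,c#} = M" unfolding good3_def by blast
  have "a \<in># M" "b \<in># M" "c \<in># M" using M(2) by auto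
  then have abc: "a \<in> {0,1,2}" "b \<in> {0,1,2}" "c \<in> {0,1,2}" using M(1) by auto
  have cnt: "count {#a,b,c#} 0 = count M 0" "count {#a,b,c#} 1 = count M 1" "count {#a,b,c#} 2 = count M 2"
    using M(2) by auto
  from M(1) consider "M = {#0,1,2#}" | "M = {#0,0,1#}" | "M = {#0,0,2#}" by blast
  then show ?R
  proof cases
    case 1 then show ?thesis using cnt abc by (simp, elim disjE; simp)
  next
    case 2 then show ?thesis using cnt abc by (simp, elim disjE; simp)
  next
    case 3 then show ?thesis using cnt abc by (simp, elim disjE; simp)
  qed
next
  assume ?R
  then show "good3 a b c" unfolding good3_def by (auto simp: add_mset_commute)
qed

lemma good3_swap12: "good3 a b c = good3 b a c" unfolding good3_def by (metis add_mset_commute)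
lemma good3_swap23: "good3 a b c = good3 a c b" unfolding good3_def by (metis add_mset_commute)

lemma concat_nth_blk:
  assumes "\<forall>x\<in>set xs. length x = m" "i < length xs" "k < m"
  shows "concat xs ! (i*m+k) = xs!i!k"
  using assms
proof (induction xs arbitrary: i)
  case Nil then show ?case by simp
next
  case (Cons x xs)
  show ?case
  proof (cases i)
    case 0 then show ?thesis using Cons.prems by (simp add: nth_append)
  next
    case (Suc j)
    have "concat (x#xs) ! (i*m+k) = concat xs ! (j*m+k)"
      using Cons.prems Suc by (simp add: nth_append)
    also have "\<dots> = xs!j!k" using Cons.IH[of j] Cons.prems Suc by simp
    finally show ?thesis using Suc by simp
  qed
qed

lemma length_concat_blk: "\<forall>x\<in>set xs. length x = m \<Longrightarrow> length (concat xs) = length xs * m"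
  by (induction xs) auto

lemma idx_bound: assumes "i < r" "k < (m::nat)" shows "i*m+k < m*r"
proof -
  have "Suc i * m \<le> r * m" using assms(1) by (intro mult_le_mono1) simp
  then show ?thesis using assms(2) by (simp add: mult.commute)
qed

lemma weight_lt:
  assumes "length a = m" "length b = m" "weight a < weight b"
  shows "\<exists>k<m. a!k = 0 \<and> b!k \<noteq> 0"
proof (rule ccontr)
  assume "\<not> ?thesis"
  then have "{k. k < length b \<and> b!k \<noteq> 0} \<subseteq> {k. k < length a \<and> a!k \<noteq> 0}" using assms by auto
  then have "card {k. k < length b \<and> b!k \<noteq> 0} \<le> card {k. k < length a \<and> a!k \<noteq> 0}"
    by (intro card_mono) auto
  then show False using assms(3) unfolding weight_def length_filter_conv_card by simp
qed

lemma adm_sub: "admissible m X \<Longrightarrow> X \<subseteq> ternary_vecs m"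
  unfolding admissible_def by (elim conjE)

lemma adm_pair: assumes "admissible m X" "s \<in> X" "s' \<in> X" "s \<noteq> s'"
  shows "\<exists>i<m. s!i = 0 \<and> s'!i \<noteq> 0"
proof -
  have "\<forall>s\<in>X. \<forall>s'\<in>X. s \<noteq> s' \<longrightarrow>
        (\<exists>i<m. s ! i = 0 \<and> s' ! i \<noteq> 0) \<and> (\<exists>j<m. s ! j \<noteq> 0 \<and> s' ! j = 0)"
    using assms(1) unfolding admissible_def by (elim conjE)
  then show ?thesis using assms(2-4) by simp
qed

lemma adm_triple: assumes "admissible m X" "s \<in> X" "s' \<in> X" "s'' \<in> X" "s \<noteq> s'" "s \<noteq> s''" "s' \<noteq> s''"
  shows "\<exists>k<m. good3 (s ! k) (s' ! k) (s'' ! k)"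
proof -
  have "\<forall>s\<in>X. \<forall>s'\<in>X. \<forall>s''\<in>X. s \<noteq> s' \<and> s \<noteq> s'' \<and> s' \<noteq> s'' \<longrightarrow>
        (\<exists>k<m. good3 (s ! k) (s' ! k) (s'' ! k))"
    using assms(1) unfolding admissible_def by (elim conjE)
  then show ?thesis using assms(2-7) by simp
qed

definition rep :: "nat list set \<Rightarrow> (nat \<Rightarrow> nat list set) \<Rightarrow> nat list \<Rightarrow> nat list \<Rightarrow> nat list list \<Rightarrow> bool" where
  "rep T S u t xs \<longleftrightarrow> t \<in> T \<and> u = concat xs \<and> length xs = length t \<and> (\<forall>i<length t. xs!i \<in> S (t!i))"

lemma compose_rep: "u \<in> compose T S \<Longrightarrow> \<exists>t xs. rep T S u t xs"
proof -
  assume "u \<in> compose T S"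
  then obtain t xs where "t \<in> T" "u = concat xs" "length xs = length t" "\<forall>i<length t. xs!i \<in> S (t!i)"
    unfolding compose_def by auto
  then show ?thesis unfolding rep_def by blast
qed

lemma tern_nz: "v \<in> ternary_vecs m \<Longrightarrow> k < m \<Longrightarrow> v!k \<noteq> 0 \<Longrightarrow> v!k = 1 \<or> v!k = 2"
proof -
  assume a: "v \<in> ternary_vecs m" "k < m" "v!k \<noteq> 0"
  then have "v!k \<in> set v" unfolding ternary_vecs_def by simp
  then have "v!k \<in> {0,1,2}" using a(1) unfolding ternary_vecs_def by blast
  then show ?thesis using a(3) by simp
qed

context
  fixes m r :: nat and S :: "nat \<Rightarrow> nat list set" and T :: "nat list set"
  assumes ME: "meta_extendable m S" and AT: "admissible r T"
begin

lemma Sadm: "j \<in> {0,1,2} \<Longrightarrow> admissible m (S j)"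
  using ME unfolding meta_extendable_def by auto

lemma Stern: "j \<in> {0,1,2} \<Longrightarrow> v \<in> S j \<Longrightarrow> v \<in> ternary_vecs m"
proof -
  assume "j \<in> {0,1,2}" "v \<in> S j"
  moreover have "S j \<subseteq> ternary_vecs m" using Sadm[OF \<open>j \<in> {0,1,2}\<close>] by (rule adm_sub)
  ultimately show ?thesis by blast
qed

lemma rep_props:
  assumes "rep T S u t xs"
  shows "length t = r" "length xs = r" "\<And>i. i<r \<Longrightarrow> t!i \<in> {0,1,2}"
    "\<And>i. i<r \<Longrightarrow> xs!i \<in> S (t!i)" "\<And>i. i<r \<Longrightarrow> xs!i \<in> ternary_vecs m"
    "\<forall>x\<in>set xs. length x = m" "length u = m*r"
proof -
  have tT: "t \<in> ternary_vecs r" using assms adm_sub[OF AT] unfolding rep_def by blast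
  show lt: "length t = r" using tT unfolding ternary_vecs_def by simp
  show lx: "length xs = r" using assms lt unfolding rep_def by simp
  show tc: "\<And>i. i<r \<Longrightarrow> t!i \<in> {0,1,2}" using tT lt nth_mem unfolding ternary_vecs_def by blast
  show xs: "\<And>i. i<r \<Longrightarrow> xs!i \<in> S (t!i)" using assms lt unfolding rep_def by simp
  show xt: "\<And>i. i<r \<Longrightarrow> xs!i \<in> ternary_vecs m" using tc xs Stern by blast
  show al: "\<forall>x\<in>set xs. length x = m"
    using xt lx unfolding ternary_vecs_def by (auto simp: in_set_conv_nth)
  show "length u = m*r" using assms length_concat_blk[OF al] lx unfolding rep_def by simp
qed

lemma rep_nth: assumes R: "rep T S u t xs" and "i<r" "k<m" shows "u!(i*m+k) = xs!i!k"
proof -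
  have "u = concat xs" using R unfolding rep_def by blast
  moreover have "concat xs ! (i*m+k) = xs!i!k"
    using concat_nth_blk[of xs m i k] rep_props(2,6)[OF R] assms(2,3) by simp
  ultimately show ?thesis by simp
qed

lemma rep_tern: "rep T S u t xs \<Longrightarrow> u \<in> ternary_vecs (m*r)"
proof -
  assume R: "rep T S u t xs"
  have "set u \<subseteq> {0,1,2}"
  proof
    fix a assume "a \<in> set u"
    then obtain x where x: "x \<in> set xs" "a \<in> set x" using R unfolding rep_def by auto
    then obtain i where "i < r" "x = xs!i" using rep_props[OF R] by (auto simp: in_set_conv_nth)
    then show "a \<in> {0,1,2}" using rep_props(5)[OF R] x unfolding ternary_vecs_def by auto
  qed
  then show ?thesis using rep_props(7)[OF R] unfolding ternary_vecs_def by simp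
qed

lemma pair_one:
  assumes R: "rep T S u t xs" and R': "rep T S u' t' xs'" and ne: "u \<noteq> u'"
  shows "\<exists>k<m*r. u!k = 0 \<and> u'!k \<noteq> 0"
proof -
  have "\<exists>i<r. \<exists>k<m. xs!i!k = 0 \<and> xs'!i!k \<noteq> 0"
  proof (cases "t = t'")
    case True
    then have "xs \<noteq> xs'" using R R' ne unfolding rep_def by auto
    then obtain i where i: "i < r" "xs!i \<noteq> xs'!i"
      using rep_props(2)[OF R] rep_props(2)[OF R'] by (auto simp: list_eq_iff_nth_eq)
    have "xs!i \<in> S (t!i)" "xs'!i \<in> S (t!i)" using rep_props(4)[OF R i(1)] rep_props(4)[OF R' i(1)] True by auto
    moreover have "admissible m (S (t!i))" using Sadm rep_props(3)[OF R i(1)] by blast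
    ultimately show ?thesis using i adm_pair by blast
  next
    case False
    have "t \<in> T" "t' \<in> T" using R R' unfolding rep_def by auto
    then obtain i where i: "i < r" "t!i = 0" "t'!i \<noteq> 0" using adm_pair[OF AT] False by blast
    have a: "xs!i \<in> S 0" using rep_props(4)[OF R i(1)] i by simp
    have b: "xs'!i \<in> S 1 \<union> S 2" using rep_props(4)[OF R' i(1)] rep_props(3)[OF R' i(1)] i by auto
    have "weight (xs!i) < weight (xs'!i)" using ME a b unfolding meta_extendable_def by blast
    moreover have "length (xs!i) = m" "length (xs'!i) = m"
      using rep_props(5)[OF R i(1)] rep_props(5)[OF R' i(1)] unfolding ternary_vecs_def by auto
    ultimately show ?thesis using weight_lt i(1) by blast
  qed
  then obtain i k where "i<r" "k<m" "xs!i!k = 0" "xs'!i!k \<noteq> 0" by blast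
  then show ?thesis using rep_nth[OF R] rep_nth[OF R'] idx_bound by metis
qed

lemma ex_perm:
  assumes "\<exists>k<(m::nat). good3 (a!k) (b!k) (c!k)"
  shows "\<exists>k<m. good3 (b!k) (a!k) (c!k)" "\<exists>k<m. good3 (a!k) (c!k) (b!k)"
    "\<exists>k<m. good3 (b!k) (c!k) (a!k)" "\<exists>k<m. good3 (c!k) (a!k) (b!k)"
    "\<exists>k<m. good3 (c!k) (b!k) (a!k)"
proof -
  obtain k where k: "k<m" "good3 (a!k) (b!k) (c!k)" using assms by blast
  have "good3 (b!k) (a!k) (c!k)" using k(2) good3_swap12 by blast
  moreover have "good3 (a!k) (c!k) (b!k)" using k(2) good3_swap23 by blast
  moreover have "good3 (b!k) (c!k) (a!k)" using k(2) good3_swap12 good3_swap23 by blast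
  moreover have "good3 (c!k) (a!k) (b!k)" using k(2) good3_swap12 good3_swap23 by blast
  moreover have "good3 (c!k) (b!k) (a!k)" using k(2) good3_swap12 good3_swap23 by blast
  ultimately show "\<exists>k<m. good3 (b!k) (a!k) (c!k)" "\<exists>k<m. good3 (a!k) (c!k) (b!k)"
    "\<exists>k<m. good3 (b!k) (c!k) (a!k)" "\<exists>k<m. good3 (c!k) (a!k) (b!k)"
    "\<exists>k<m. good3 (c!k) (b!k) (a!k)" using k(1) by blast+
qed

lemma block_good:
  assumes g: "good3 p q s" and a: "a \<in> S p" and b: "b \<in> S q" and c: "c \<in> S s"
  shows "\<exists>k<m. good3 (a!k) (b!k) (c!k)"
proof -
  have MEc: "(\<forall>x\<in>S 0. \<forall>y\<in>S 0. \<forall>z\<in>S 1 \<union> S 2. \<exists>k<m. good3 (x ! k) (y ! k) (z ! k)) \<and>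
     (\<forall>x\<in>S 0. \<forall>y\<in>S 1. \<forall>z\<in>S 2. \<exists>k<m. good3 (x ! k) (y ! k) (z ! k))"
    using ME unfolding meta_extendable_def by (elim conjE) (intro conjI)
  have C2: "\<And>x y z. x \<in> S 0 \<Longrightarrow> y \<in> S 0 \<Longrightarrow> z \<in> S 1 \<union> S 2 \<Longrightarrow> \<exists>k<m. good3 (x!k) (y!k) (z!k)"
    using MEc by simp
  have C3: "\<And>x y z. x \<in> S 0 \<Longrightarrow> y \<in> S 1 \<Longrightarrow> z \<in> S 2 \<Longrightarrow> \<exists>k<m. good3 (x!k) (y!k) (z!k)"
    using MEc by simp
  have D: "(p,q,s) = (0,1,2) \<or> (p,q,s) = (0,2,1) \<or> (p,q,s) = (1,0,2) \<or> (p,q,s) = (1,2,0) \<or> (p,q,s) = (2,0,1) \<or> (p,q,s) = (2,1,0) \<or> (p,q,s) = (0,0,1) \<or> (p,q,s) = (0,1,0) \<or> (p,q,s) = (1,0,0) \<or> (p,q,s) = (0,0,2) \<or> (p,q,s) = (0,2,0) \<or> (p,q,s) = (2,0,0)"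
    using g unfolding good3_iff insert_iff empty_iff by (simp only: simp_thms)
  then show ?thesis
  proof (elim disjE)
    assume "(p,q,s) = (0,1,2)"
    then have "a \<in> S 0" "b \<in> S 1" "c \<in> S 2" using a b c by auto
    then show ?thesis using C3[of a b c] by auto
  next
    assume "(p,q,s) = (0,2,1)"
    then have "a \<in> S 0" "c \<in> S 1" "b \<in> S 2" using a b c by auto
    then show ?thesis using ex_perm(2)[OF C3[of a c b]] by auto
  next
    assume "(p,q,s) = (1,0,2)"
    then have "b \<in> S 0" "a \<in> S 1" "c \<in> S 2" using a b c by auto
    then show ?thesis using ex_perm(1)[OF C3[of b a c]] by auto
  next
    assume "(p,q,s) = (1,2,0)"
    then have "c \<in> S 0" "a \<in> S 1" "b \<in> S 2" using a b c by auto
    then show ?thesis using ex_perm(3)[OF C3[of c a b]] by auto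
  next
    assume "(p,q,s) = (2,0,1)"
    then have "b \<in> S 0" "c \<in> S 1" "a \<in> S 2" using a b c by auto
    then show ?thesis using ex_perm(4)[OF C3[of b c a]] by auto
  next
    assume "(p,q,s) = (2,1,0)"
    then have "c \<in> S 0" "b \<in> S 1" "a \<in> S 2" using a b c by auto
    then show ?thesis using ex_perm(5)[OF C3[of c b a]] by auto
  next
    assume "(p,q,s) = (0,0,1)"
    then have "a \<in> S 0" "b \<in> S 0" "c \<in> S 1 \<union> S 2" using a b c by auto
    then show ?thesis using C2[of a b c] by auto
  next
    assume "(p,q,s) = (0,1,0)"
    then have "a \<in> S 0" "c \<in> S 0" "b \<in> S 1 \<union> S 2" using a b c by auto
    then show ?thesis using ex_perm(2)[OF C2[of a c b]] by auto
  next
    assume "(p,q,s) = (1,0,0)"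
    then have "c \<in> S 0" "b \<in> S 0" "a \<in> S 1 \<union> S 2" using a b c by auto
    then show ?thesis using ex_perm(5)[OF C2[of c b a]] by auto
  next
    assume "(p,q,s) = (0,0,2)"
    then have "a \<in> S 0" "b \<in> S 0" "c \<in> S 1 \<union> S 2" using a b c by auto
    then show ?thesis using C2[of a b c] by auto
  next
    assume "(p,q,s) = (0,2,0)"
    then have "a \<in> S 0" "c \<in> S 0" "b \<in> S 1 \<union> S 2" using a b c by auto
    then show ?thesis using ex_perm(2)[OF C2[of a c b]] by auto
  next
    assume "(p,q,s) = (2,0,0)"
    then have "c \<in> S 0" "b \<in> S 0" "a \<in> S 1 \<union> S 2" using a b c by auto
    then show ?thesis using ex_perm(5)[OF C2[of c b a]] by auto
  qed
qed

lemma triple: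
  assumes R: "rep T S u t xs" and R': "rep T S u' t' xs'" and R'': "rep T S u'' t'' xs''"
    and ne: "u \<noteq> u'" "u \<noteq> u''" "u' \<noteq> u''"
  shows "\<exists>k<m*r. good3 (u!k) (u'!k) (u''!k)"
proof -
  have T: "t \<in> T" "t' \<in> T" "t'' \<in> T" using R R' R'' unfolding rep_def by auto
  have bg: "\<exists>k<m. good3 (xs!i!k) (xs'!i!k) (xs''!i!k)" if "i < r" "good3 (t!i) (t'!i) (t''!i)" for i
    using block_good[OF that(2)] rep_props(4)[OF R that(1)] rep_props(4)[OF R' that(1)]
      rep_props(4)[OF R'' that(1)] by blast
  have g002: "good3 0 0 (v!k)" if "v \<in> ternary_vecs m" "k < m" "v!k \<noteq> 0" for v k
    using tern_nz[OF that] by (auto simp: good3_iff)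
  have "\<exists>i<r. \<exists>k<m. good3 (xs!i!k) (xs'!i!k) (xs''!i!k)"
  proof (cases "t = t' \<and> t = t''")
    case True
    then have "xs \<noteq> xs'" using R R' ne unfolding rep_def by auto
    then obtain i where i: "i < r" "xs!i \<noteq> xs'!i"
      using rep_props(2)[OF R] rep_props(2)[OF R'] by (auto simp: list_eq_iff_nth_eq)
    have m: "xs!i \<in> S (t!i)" "xs'!i \<in> S (t!i)" "xs''!i \<in> S (t!i)"
      using rep_props(4)[OF R i(1)] rep_props(4)[OF R' i(1)] rep_props(4)[OF R'' i(1)] True by auto
    have ad: "admissible m (S (t!i))" using Sadm rep_props(3)[OF R i(1)] by blast
    have tv: "xs!i \<in> ternary_vecs m" "xs'!i \<in> ternary_vecs m"
      using rep_props(5)[OF R i(1)] rep_props(5)[OF R' i(1)] by auto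
    consider "xs''!i \<noteq> xs!i \<and> xs''!i \<noteq> xs'!i" | "xs''!i = xs!i" | "xs''!i = xs'!i" by blast
    then show ?thesis
    proof cases
      case 1
      then have "\<exists>k<m. good3 (xs!i!k) (xs'!i!k) (xs''!i!k)" using adm_triple[OF ad m] i(2) by metis
      then show ?thesis using i(1) by blast
    next
      case 2
      then obtain k where k: "k<m" "xs!i!k = 0" "xs'!i!k \<noteq> 0" using adm_pair[OF ad m(1) m(2) i(2)] by blast
      then have "good3 0 0 (xs'!i!k)" using g002 tv by blast
      then show ?thesis using 2 k i good3_swap23 by metis
    next
      case 3
      then obtain k where k: "k<m" "xs'!i!k = 0" "xs!i!k \<noteq> 0" using adm_pair[OF ad m(2) m(1)] i(2) by metis
      then have "good3 0 0 (xs!i!k)" using g002 tv by blast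
      then show ?thesis using 3 k i good3_swap12 good3_swap23 by metis
    qed
  next
    case False
    have g0: "good3 0 0 v" if "v \<in> {0,1,2}" "v \<noteq> 0" for v using that by (auto simp: good3_iff)
    have "\<exists>i<r. good3 (t!i) (t'!i) (t''!i)"
    proof (cases "t = t' \<or> t = t'' \<or> t' = t''")
      case True
      then consider "t = t'" "t \<noteq> t''" | "t = t''" "t \<noteq> t'" | "t' = t''" "t \<noteq> t'" using False by blast
      then show ?thesis
      proof cases
        case 1
        then obtain i where i: "i < r" "t!i = 0" "t''!i \<noteq> 0" using adm_pair[OF AT] T by blast
        then show ?thesis using 1 g0 rep_props(3)[OF R'' i(1)] by auto
      next
        case 2
        then obtain i where i: "i < r" "t!i = 0" "t'!i \<noteq> 0" using adm_pair[OF AT] T by blast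
        then show ?thesis using 2 g0 rep_props(3)[OF R' i(1)] good3_swap23 by metis
      next
        case 3
        then obtain i where i: "i < r" "t'!i = 0" "t!i \<noteq> 0" using adm_pair[OF AT] T by blast
        then show ?thesis using 3 g0 rep_props(3)[OF R i(1)] good3_swap12 good3_swap23 by metis
      qed
    next
      case False
      then show ?thesis using adm_triple[OF AT] T by blast
    qed
    then show ?thesis using bg by blast
  qed
  then obtain i k where "i<r" "k<m" "good3 (xs!i!k) (xs'!i!k) (xs''!i!k)" by blast
  then show ?thesis using rep_nth[OF R] rep_nth[OF R'] rep_nth[OF R''] idx_bound by metis
qed

end

theorem lemma3p6:
  fixes m r :: nat and S :: "nat \<Rightarrow> nat list set" and T :: "nat list set"
  assumes "meta_extendable m S"
    and "admissible r T"
  shows "admissible (m * r) (compose T S)"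
proof -
  have A: "compose T S \<subseteq> ternary_vecs (m*r)"
  proof
    fix u assume "u \<in> compose T S"
    then obtain t xs where "rep T S u t xs" using compose_rep by blast
    then show "u \<in> ternary_vecs (m*r)" using rep_tern[OF assms] by blast
  qed
  have B: "\<forall>s\<in>compose T S. \<forall>s'\<in>compose T S. s \<noteq> s' \<longrightarrow>
        (\<exists>i<m*r. s ! i = 0 \<and> s' ! i \<noteq> 0) \<and> (\<exists>j<m*r. s ! j \<noteq> 0 \<and> s' ! j = 0)"
  proof (intro ballI impI)
    fix u u' assume "u \<in> compose T S" "u' \<in> compose T S" "u \<noteq> u'"
    then obtain t xs t' xs' where R: "rep T S u t xs" "rep T S u' t' xs'" using compose_rep by metis
    show "(\<exists>i<m * r. u ! i = 0 \<and> u' ! i \<noteq> 0) \<and> (\<exists>j<m * r. u ! j \<noteq> 0 \<and> u' ! j = 0)"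
      using pair_one[OF assms R(1) R(2)] pair_one[OF assms R(2) R(1)] \<open>u \<noteq> u'\<close> by auto
  qed
  have C: "\<forall>s\<in>compose T S. \<forall>s'\<in>compose T S. \<forall>s''\<in>compose T S. s \<noteq> s' \<and> s \<noteq> s'' \<and> s' \<noteq> s'' \<longrightarrow>
        (\<exists>k<m*r. good3 (s ! k) (s' ! k) (s'' ! k))"
  proof (intro ballI impI)
    fix u u' u'' assume "u \<in> compose T S" "u' \<in> compose T S" "u'' \<in> compose T S"
      and ne: "u \<noteq> u' \<and> u \<noteq> u'' \<and> u' \<noteq> u''"
    then obtain t xs t' xs' t'' xs'' where R: "rep T S u t xs" "rep T S u' t' xs'" "rep T S u'' t'' xs''"
      using compose_rep by metis
    show "\<exists>k<m * r. good3 (u ! k) (u' ! k) (u'' ! k)"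
      using triple[OF assms R] ne by blast
  qed
  show ?thesis unfolding admissible_def using A B C by (intro conjI)
qed

end
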